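(* Let $V\subseteq B(H)\otimes N$ be a quantum multi-relation on $(M,N)$, with $M$ and $N$ minimally represented on $H$ and $K$. Then the adjacency operators $\mathcal{A}_{\mathcal{P}_V}$, $\mathcal{A}_{\mathcal{S}_V}$ and $\mathcal{A}_{\mathcal{P}_{\tilde V}}$ are completely positive maps. Moreover, $\mathcal{A}_{\mathcal{P}_V}$ and $\mathcal{A}_{\mathcal{P}_{\tilde V}}$ satisfy the Schur idempotent condition $$m(\mathcal{A}_{\mathcal{P}_V}\otimes\mathcal{A}_{\mathcal{P}_V})m^*=\mathcal{A}_{\mathcal{P}_V},\qquad m(\mathcal{A}_{\mathcal{P}_{\tilde V}}\otimes\mathcal{A}_{\mathcal{P}_{\tilde V}})m^*=\mathcal{A}_{\mathcal{P}_{\tilde V}},$$ where $\mathcal{A}_{\mathcal{P}_V}\in B(L^2(M)\otimes L^2(N))$ and $\mathcal{A}_{\mathcal{P}_{\tilde V}}\in B(L^2(M))$, and $m$ denotes the multiplication of $M\otimes N$, resp. $M$.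
   Context: All Hilbert spaces are finite dimensional. $M\subseteq B(H)$, $N\subseteq B(K)$ are finite-dimensional von Neumann algebras, minimally represented: $M'=Z(M)$, $N'=Z(N)$. $A^{op}$ is the opposite algebra. A quantum multi-relation on $(M,N)$ is a subspace $V\subseteq B(H)\otimes N$ which is an $(M'\otimes1)$–$(M'\otimes1)$ bimodule with $(1\otimes Z(N))V\subseteq V$. Weaver actions: $M\otimes M^{op}$ acts on $B(H)$ by $\pi(T_1\otimes T_2)S=T_1ST_2$, and $M\otimes M^{op}\otimes N\otimes N^{op}$ acts on $B(H\otimes K)$ by $\pi(T_1\otimes T_2\otimes T_3\otimes T_4)(S_1\otimes S_2)=T_1S_1T_2\otimes T_3S_2T_4$; operator spaces carry Hilbert–Schmidt inner products. $\mathcal{P}_V$ is the projection in $M\otimes M^{op}\otimes N\otimes N^{op}$ with $\pi(\mathcal{P}_V)$ the orthogonal projection onto $V$. $\tilde V=(\mathrm{id}\otimes\mathrm{tr}_K)(V)\subseteq B(H)$ is the underlying single-edged graph, and $\mathcal{P}_{\tilde V}$ the projection in $M\otimes M^{op}$ with $\pi(\mathcal{P}_{\tilde V})$ the orthogonal projection onto $\tilde V$. $\mathcal{S}_V=(\mathrm{id}\otimes\mathrm{id}\otimes\mathrm{tr}_K)(\mathrm{id}\otimes\mathrm{id}\otimes m_N)(\mathcal{P}_V)\in M\otimes M^{op}$ with $m_N(a\otimes b)=ab$. Adjacency operators: $\mathcal{A}_{\mathcal{P}_V}(m\otimes n)=(\mathrm{tr}_H\otimes\mathrm{id}\otimes\mathrm{tr}_K\otimes\mathrm{id})(\mathcal{P}_V(m\otimes1\otimes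 n\otimes1))$ on $M\otimes N$; $\mathcal{A}_{\mathcal{S}_V}(m)=(\mathrm{tr}_H\otimes\mathrm{id})(\mathcal{S}_V(m\otimes1))$ and $\mathcal{A}_{\mathcal{P}_{\tilde V}}(m)=(\mathrm{tr}_H\otimes\mathrm{id})(\mathcal{P}_{\tilde V}(m\otimes1))$ on $M$ (outputs in $A^{op}$ identified with $A$ as vector spaces). $L^2(M)$, $L^2(N)$ are $M,N$ with Hilbert–Schmidt inner products from $\mathrm{tr}_H,\mathrm{tr}_K$, and $m^*$ is the adjoint of multiplication $L^2\otimes L^2\to L^2$. *)

theory Defs
  imports "HOL-Analysis.Analysis"
begin

(* H = C^'n, K = C^'k for finite index types 'n, 'k.
   B(H) = complex^'n^'n, B(H \<otimes> K) = complex^('n\<times>'k)^('n\<times>'k) (Kronecker identification).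
   tr = the (unnormalised) matrix trace. *)

definition madj :: "complex^'i^'i \<Rightarrow> complex^'i^'i" where
  "madj A = (\<chi> i j. cnj (A$j$i))"

definition mtr :: "complex^'i^'i \<Rightarrow> complex" where
  "mtr A = (\<Sum>i\<in>UNIV. A$i$i)"

definition hs_inner :: "complex^'i^'i \<Rightarrow> complex^'i^'i \<Rightarrow> complex" where
  "hs_inner A B = mtr (madj A ** B)"

definition msc :: "complex \<Rightarrow> complex^'i^'j \<Rightarrow> complex^'i^'j" where
  "msc c A = (\<chi> i j. c * A$i$j)"

definition munit :: "'i \<Rightarrow> 'i \<Rightarrow> complex^'i^'i" where
  "munit p q = (\<chi> i j. if i = p \<and> j = q then 1 else 0)"

definition csubspace :: "(complex^'i^'j) set \<Rightarrow> bool" where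
  "csubspace S \<longleftrightarrow> 0 \<in> S \<and> (\<forall>x\<in>S. \<forall>y\<in>S. x + y \<in> S) \<and> (\<forall>c. \<forall>x\<in>S. msc c x \<in> S)"

definition cspan :: "(complex^'i^'j) set \<Rightarrow> (complex^'i^'j) set" where
  "cspan S = \<Inter>{T. csubspace T \<and> S \<subseteq> T}"

definition fd_vNa :: "(complex^'i^'i) set \<Rightarrow> bool" where
  "fd_vNa M \<longleftrightarrow> csubspace M \<and> mat 1 \<in> M \<and> (\<forall>x\<in>M. \<forall>y\<in>M. x ** y \<in> M)
      \<and> (\<forall>x\<in>M. madj x \<in> M)"

definition commutant :: "(complex^'i^'i) set \<Rightarrow> (complex^'i^'i) set" where
  "commutant M = {T. \<forall>A\<in>M. T ** A = A ** T}"

definition center :: "(complex^'i^'i) set \<Rightarrow> (complex^'i^'i) set" where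
  "center M = M \<inter> commutant M"

definition minimally_represented :: "(complex^'i^'i) set \<Rightarrow> bool" where
  "minimally_represented M \<longleftrightarrow> commutant M = center M"

definition kron :: "complex^'a^'a \<Rightarrow> complex^'b^'b \<Rightarrow> complex^('a\<times>'b)^('a\<times>'b)" where
  "kron A B = (\<chi> ip jq. A$(fst ip)$(fst jq) * B$(snd ip)$(snd jq))"

definition alg_tensor :: "(complex^'a^'a) set \<Rightarrow> (complex^'b^'b) set
      \<Rightarrow> (complex^('a\<times>'b)^('a\<times>'b)) set" where
  "alg_tensor M N = cspan {kron x y | x y. x \<in> M \<and> y \<in> N}"

definition q_multi_relation :: "(complex^'n^'n) set \<Rightarrow> (complex^'k^'k) set
      \<Rightarrow> (complex^('n\<times>'k)^('n\<times>'k)) set \<Rightarrow> bool" where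
  "q_multi_relation M N V \<longleftrightarrow> csubspace V \<and> V \<subseteq> alg_tensor UNIV N
     \<and> (\<forall>a\<in>commutant M. \<forall>X\<in>V. kron a (mat 1) ** X \<in> V \<and> X ** kron a (mat 1) \<in> V)
     \<and> (\<forall>z\<in>center N. \<forall>X\<in>V. kron (mat 1) z ** X \<in> V)"

definition orth_proj :: "(complex^'i^'i) set \<Rightarrow> complex^'i^'i \<Rightarrow> complex^'i^'i" where
  "orth_proj V X = (THE Y. Y \<in> V \<and> (\<forall>Z\<in>V. hs_inner Z (X - Y) = 0))"

(* ---- B(H) \<otimes> B(H)^op \<otimes> B(K) \<otimes> B(K)^op ----
   An element T is stored by its coefficients: T$(a,c,e,g)$(b,d,f,h) is the coefficient
   of e_ab \<otimes> e_cd \<otimes> e_ef \<otimes> e_gh (op-factors stored as plain matrices, i.e. the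
   vector space identification A^op = A). *)
type_synonym ('n,'k) t4 = "complex^('n\<times>'n\<times>'k\<times>'k)^('n\<times>'n\<times>'k\<times>'k)"

(* multiplication in B(H) \<otimes> B(H)^op \<otimes> B(K) \<otimes> B(K)^op (reversed product in op-slots) *)
definition mult4 :: "('n::finite,'k::finite) t4 \<Rightarrow> ('n,'k) t4 \<Rightarrow> ('n,'k) t4" where
  "mult4 X Y = vec_lambda (\<lambda>(a,c,e,g). vec_lambda (\<lambda>(b,d,f,h).
     \<Sum>x\<in>UNIV. \<Sum>y\<in>UNIV. \<Sum>z\<in>UNIV. \<Sum>w\<in>UNIV.
        X$(a,y,e,w)$(x,d,z,h) * Y$(x,c,z,g)$(b,y,f,w)))"

(* Weaver action: linear extension of
   pi(T1\<otimes>T2\<otimes>T3\<otimes>T4)(S1\<otimes>S2) = T1 S1 T2 \<otimes> T3 S2 T4 *)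
definition pi4 :: "('n::finite,'k::finite) t4 \<Rightarrow> complex^('n\<times>'k)^('n\<times>'k)
      \<Rightarrow> complex^('n\<times>'k)^('n\<times>'k)" where
  "pi4 T S = vec_lambda (\<lambda>(a,e). vec_lambda (\<lambda>(d,h).
     \<Sum>b\<in>UNIV. \<Sum>c\<in>UNIV. \<Sum>f\<in>UNIV. \<Sum>g\<in>UNIV. T$(a,c,e,g)$(b,d,f,h) * S$(b,f)$(c,g)))"

definition P_V :: "(complex^('n::finite\<times>'k::finite)^('n\<times>'k)) set \<Rightarrow> ('n,'k) t4" where
  "P_V V = (THE T. pi4 T = orth_proj V)"

(* (m \<otimes> n) \<mapsto> m \<otimes> 1 \<otimes> n \<otimes> 1, extended linearly from B(H \<otimes> K) *)
definition emb4 :: "complex^('n::finite\<times>'k::finite)^('n\<times>'k) \<Rightarrow> ('n,'k) t4" where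
  "emb4 X = vec_lambda (\<lambda>(a,c,e,g). vec_lambda (\<lambda>(b,d,f,h).
     X$(a,e)$(b,f) * (if c = d then 1 else 0) * (if g = h then 1 else 0)))"

(* tr_H \<otimes> id \<otimes> tr_K \<otimes> id, output in B(H)^op \<otimes> B(K)^op identified with B(H \<otimes> K) *)
definition ptr13 :: "('n::finite,'k::finite) t4 \<Rightarrow> complex^('n\<times>'k)^('n\<times>'k)" where
  "ptr13 Y = vec_lambda (\<lambda>(c,g). vec_lambda (\<lambda>(d,h).
     \<Sum>a\<in>UNIV. \<Sum>e\<in>UNIV. Y$(a,c,e,g)$(a,d,e,h)))"

definition A_PV :: "(complex^('n::finite\<times>'k::finite)^('n\<times>'k)) set
      \<Rightarrow> complex^('n\<times>'k)^('n\<times>'k) \<Rightarrow> complex^('n\<times>'k)^('n\<times>'k)" where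
  "A_PV V X = ptr13 (mult4 (P_V V) (emb4 X))"

(* ---- B(H) \<otimes> B(H)^op : T$(a,c)$(b,d) = coefficient of e_ab \<otimes> e_cd ---- *)
definition mult2 :: "complex^('n\<times>'n)^('n\<times>'n) \<Rightarrow> complex^('n\<times>'n)^('n\<times>'n)
      \<Rightarrow> complex^('n\<times>'n)^('n::finite\<times>'n)" where
  "mult2 X Y = vec_lambda (\<lambda>(a,c). vec_lambda (\<lambda>(b,d).
     \<Sum>x\<in>UNIV. \<Sum>y\<in>UNIV. X$(a,y)$(x,d) * Y$(x,c)$(b,y)))"

(* pi(T1 \<otimes> T2) S = T1 S T2, extended linearly *)
definition pi2 :: "complex^('n::finite\<times>'n)^('n\<times>'n) \<Rightarrow> complex^'n^'n \<Rightarrow> complex^'n^'n" where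
  "pi2 T S = (\<chi> a d. \<Sum>b\<in>UNIV. \<Sum>c\<in>UNIV. T$(a,c)$(b,d) * S$b$c)"

(* m \<mapsto> m \<otimes> 1 *)
definition emb2 :: "complex^'n^'n \<Rightarrow> complex^('n::finite\<times>'n)^('n\<times>'n)" where
  "emb2 m = vec_lambda (\<lambda>(a,c). vec_lambda (\<lambda>(b,d). m$a$b * (if c = d then 1 else 0)))"

(* tr_H \<otimes> id, output in B(H)^op identified with B(H) *)
definition ptr1 :: "complex^('n::finite\<times>'n)^('n\<times>'n) \<Rightarrow> complex^'n^'n" where
  "ptr1 Y = (\<chi> c d. \<Sum>a\<in>UNIV. Y$(a,c)$(a,d))"

definition ptrK :: "complex^('n\<times>'k::finite)^('n\<times>'k) \<Rightarrow> complex^'n^'n" where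
  "ptrK X = (\<chi> i j. \<Sum>p\<in>(UNIV::'k set). X$(i,p)$(j,p))"

definition V_tilde :: "(complex^('n\<times>'k::finite)^('n\<times>'k)) set \<Rightarrow> (complex^'n^'n) set" where
  "V_tilde V = ptrK ` V"

definition P_Vt :: "(complex^('n::finite\<times>'k::finite)^('n\<times>'k)) set
      \<Rightarrow> complex^('n\<times>'n)^('n\<times>'n)" where
  "P_Vt V = (THE T. pi2 T = orth_proj (V_tilde V))"

definition A_PVt :: "(complex^('n::finite\<times>'k::finite)^('n\<times>'k)) set
      \<Rightarrow> complex^'n^'n \<Rightarrow> complex^'n^'n" where
  "A_PVt V m = ptr1 (mult2 (P_Vt V) (emb2 m))"

(* id \<otimes> id \<otimes> m_K : B(H)\<otimes>B(H)^op\<otimes>B(K)\<otimes>B(K)^op \<rightarrow> B(H)\<otimes>B(H)^op\<otimes>B(K),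
   m(e_ef \<otimes> e_gh) = e_ef e_gh *)
definition id_id_mult :: "('n::finite,'k::finite) t4
      \<Rightarrow> complex^('n\<times>'n\<times>'k)^('n\<times>'n\<times>'k)" where
  "id_id_mult T = vec_lambda (\<lambda>(a,c,e). vec_lambda (\<lambda>(b,d,h).
     \<Sum>f\<in>UNIV. T$(a,c,e,f)$(b,d,f,h)))"

definition ptr3 :: "complex^('n::finite\<times>'n\<times>'k::finite)^('n\<times>'n\<times>'k) \<Rightarrow> complex^('n\<times>'n)^('n\<times>'n)" where
  "ptr3 R = vec_lambda (\<lambda>(a,c). vec_lambda (\<lambda>(b,d).
     \<Sum>e\<in>(UNIV::'k set). R$(a,c,e)$(b,d,e)))"

definition S_V :: "(complex^('n::finite\<times>'k::finite)^('n\<times>'k)) set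
      \<Rightarrow> complex^('n\<times>'n)^('n\<times>'n)" where
  "S_V V = ptr3 (id_id_mult (P_V V))"

definition A_SV :: "(complex^('n::finite\<times>'k::finite)^('n\<times>'k)) set
      \<Rightarrow> complex^'n^'n \<Rightarrow> complex^'n^'n" where
  "A_SV V m = ptr1 (mult2 (S_V V) (emb2 m))"

definition cinner :: "complex^'i \<Rightarrow> complex^'i \<Rightarrow> complex" where
  "cinner u w = (\<Sum>k\<in>UNIV. cnj (u$k) * w$k)"

(* the r\<times>r block operator matrix [a i j] is a positive operator on H^r *)
definition block_pos :: "nat \<Rightarrow> (nat \<Rightarrow> nat \<Rightarrow> complex^'i^'i) \<Rightarrow> bool" where
  "block_pos r a \<longleftrightarrow> (\<forall>v :: nat \<Rightarrow> complex^'i.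
     Im (\<Sum>i<r. \<Sum>j<r. cinner (v i) (a i j *v v j)) = 0
     \<and> 0 \<le> Re (\<Sum>i<r. \<Sum>j<r. cinner (v i) (a i j *v v j)))"

definition cp_on :: "(complex^'i^'i) set \<Rightarrow> (complex^'i^'i \<Rightarrow> complex^'i^'i) \<Rightarrow> bool" where
  "cp_on A \<Phi> \<longleftrightarrow> (\<forall>r a. (\<forall>i<r. \<forall>j<r. a i j \<in> A) \<longrightarrow> block_pos r a
        \<longrightarrow> block_pos r (\<lambda>i j. \<Phi> (a i j)))"

(* multiplication m : L^2(A) \<otimes> L^2(A) \<rightarrow> L^2(A), linear extension of x \<otimes> y \<mapsto> x y *)
definition mmult :: "complex^('i::finite\<times>'i)^('i\<times>'i) \<Rightarrow> complex^'i^'i" where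
  "mmult W = (\<chi> i j. \<Sum>k\<in>(UNIV::'i set). W$(i,k)$(k,j))"

definition mstar :: "(complex^'i^'i) set \<Rightarrow> complex^'i^'i \<Rightarrow> complex^('i::finite\<times>'i)^('i\<times>'i)" where
  "mstar A z = (THE w. w \<in> alg_tensor A A
      \<and> (\<forall>u\<in>alg_tensor A A. hs_inner w u = hs_inner z (mmult u)))"

(* \<Phi> \<otimes> \<Phi>, linear extension of x \<otimes> y \<mapsto> \<Phi> x \<otimes> \<Phi> y *)
definition tmap :: "(complex^'i^'i \<Rightarrow> complex^'i^'i) \<Rightarrow> complex^('i\<times>'i)^('i\<times>'i)
      \<Rightarrow> complex^('i::finite\<times>'i)^('i\<times>'i)" where
  "tmap \<Phi> W = (\<Sum>p\<in>UNIV. \<Sum>q\<in>UNIV. \<Sum>r\<in>UNIV. \<Sum>s\<in>UNIV.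
      msc (W$(p,r)$(q,s)) (kron (\<Phi> (munit p q)) (\<Phi> (munit r s))))"

definition schur_idempotent :: "(complex^'i^'i) set \<Rightarrow> (complex^'i^'i \<Rightarrow> complex^'i^'i)
      \<Rightarrow> bool" where
  "schur_idempotent A \<Phi> \<longleftrightarrow> (\<forall>z\<in>A. mmult (tmap \<Phi> (mstar A z)) = \<Phi> z)"

end

theory Submission
  imports Defs
begin


lemma sum_UNIV_prod: "(\<Sum>u\<in>(UNIV::('a::finite\<times>'b::finite) set). f u) = (\<Sum>a\<in>UNIV. \<Sum>b\<in>UNIV. f (a,b))"
proof -
  have "(\<Sum>u\<in>(UNIV::('a\<times>'b) set). f u) = (\<Sum>u\<in>UNIV\<times>UNIV. f u)" by simp
  also have "\<dots> = (\<Sum>a\<in>UNIV. \<Sum>b\<in>UNIV. f (a,b))" by (subst sum.cartesian_product) simp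
  finally show ?thesis .
qed

lemma msc_nth[simp]: "msc c A $ i $ j = c * A $ i $ j"
  by (simp add: msc_def)

lemma madj_nth[simp]: "madj A $ i $ j = cnj (A $ j $ i)"
  by (simp add: madj_def)

lemma munit_nth[simp]: "munit p q $ i $ j = (if i = p \<and> j = q then 1 else 0)"
  by (simp add: munit_def)

lemma kron_nth[simp]: "kron A B $ (i,k) $ (j,l) = A$i$j * B$k$l"
  by (simp add: kron_def)

lemma mmult_nth: "(A ** B) $ i $ j = (\<Sum>k\<in>UNIV. A$i$k * B$k$j)"
  by (simp add: matrix_matrix_mult_def)

lemma hs_inner_alt: "hs_inner A B = (\<Sum>i\<in>UNIV. \<Sum>j\<in>UNIV. cnj (A$i$j) * B$i$j)"
  unfolding hs_inner_def mtr_def mmult_nth madj_nth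
  by (rule sum.swap)


lemma hs_inner_add_right: "hs_inner A (B + C) = hs_inner A B + hs_inner A C"
  by (simp add: hs_inner_alt algebra_simps sum.distrib)

lemma hs_inner_add_left: "hs_inner (A + B) C = hs_inner A C + hs_inner B C"
  by (simp add: hs_inner_alt algebra_simps sum.distrib)

lemma hs_inner_diff_right: "hs_inner A (B - C) = hs_inner A B - hs_inner A C"
  by (simp add: hs_inner_alt algebra_simps sum_subtractf)

lemma hs_inner_diff_left: "hs_inner (A - B) C = hs_inner A C - hs_inner B C"
  by (simp add: hs_inner_alt algebra_simps sum_subtractf)

lemma hs_inner_msc_right: "hs_inner A (msc c B) = c * hs_inner A B"
  by (simp add: hs_inner_alt sum_distrib_left algebra_simps)

lemma hs_inner_msc_left: "hs_inner (msc c A) B = cnj c * hs_inner A B"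
  by (simp add: hs_inner_alt sum_distrib_left algebra_simps)

lemma hs_inner_commute: "hs_inner B A = cnj (hs_inner A B)"
  by (simp add: hs_inner_alt mult.commute)

lemma hs_inner_zero_left[simp]: "hs_inner 0 A = 0"
  by (simp add: hs_inner_alt)

lemma hs_inner_zero_right[simp]: "hs_inner A 0 = 0"
  by (simp add: hs_inner_alt)

lemma Re_hs_inner: "Re (hs_inner A B) = inner A B"
  by (simp add: hs_inner_alt inner_vec_def inner_complex_def Re_sum)

lemma hs_inner_self_eq0: "hs_inner A A = 0 \<Longrightarrow> A = 0"
  by (metis Re_hs_inner inner_eq_zero_iff zero_complex.simps(1))

lemma msc_minus1: "msc (-1) A = - A"
  by (simp add: vec_eq_iff)

lemma csubspace_0: "csubspace V \<Longrightarrow> 0 \<in> V"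
  by (simp add: csubspace_def)
lemma csubspace_add: "csubspace V \<Longrightarrow> x \<in> V \<Longrightarrow> y \<in> V \<Longrightarrow> x + y \<in> V"
  by (simp add: csubspace_def)
lemma csubspace_msc: "csubspace V \<Longrightarrow> x \<in> V \<Longrightarrow> msc c x \<in> V"
  by (simp add: csubspace_def)
lemma csubspace_uminus: "csubspace V \<Longrightarrow> x \<in> V \<Longrightarrow> - x \<in> V"
  by (metis csubspace_msc msc_minus1)
lemma csubspace_diff: "csubspace V \<Longrightarrow> x \<in> V \<Longrightarrow> y \<in> V \<Longrightarrow> x - y \<in> V"
  by (metis csubspace_add csubspace_uminus diff_conv_add_uminus)

lemma csubspace_sum: "csubspace V \<Longrightarrow> (\<And>i. i \<in> S \<Longrightarrow> f i \<in> V) \<Longrightarrow> sum f S \<in> V"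
proof (induction S rule: infinite_finite_induct)
  case (infinite A) then show ?case by (simp add: csubspace_0)
next
  case empty then show ?case by (simp add: csubspace_0)
next
  case (insert x F) then show ?case by (simp add: csubspace_add)
qed

lemma scaleR_msc: "scaleR r (A::complex^'i^'j) = msc (complex_of_real r) A"
proof -
  have "(scaleR r A) $ i $ j = complex_of_real r * A $ i $ j" for i j
    by (simp only: vector_scaleR_component) (simp add: scaleR_conv_of_real)
  then show ?thesis by (simp add: vec_eq_iff)
qed

lemma csubspace_subspace: "csubspace V \<Longrightarrow> subspace V"
  unfolding subspace_def by (simp add: csubspace_0 csubspace_add csubspace_msc scaleR_msc)

lemma op_ex:
  assumes V: "csubspace (V::(complex^'i^'i) set)"
  shows "\<exists>Y. Y \<in> V \<and> (\<forall>Z\<in>V. hs_inner Z (X - Y) = 0)"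
proof -
  have sp: "span V = V" using csubspace_subspace[OF V] by (simp add: span_eq_iff)
  obtain y z where y: "y \<in> span V" and z: "\<And>w. w \<in> span V \<Longrightarrow> orthogonal z w" and xyz: "X = y + z"
    using orthogonal_subspace_decomp_exists[of V X] by blast
  have "hs_inner Z (X - y) = 0" if Z: "Z \<in> V" for Z
  proof -
    have "X - y = z" using xyz by simp
    have 1: "Re (hs_inner Z z) = 0"
      using z[of Z] Z sp by (simp add: Re_hs_inner orthogonal_def inner_commute)
    have "msc \<i> Z \<in> V" using V Z by (simp add: csubspace_msc)
    then have "Re (hs_inner (msc \<i> Z) z) = 0"
      using z[of "msc \<i> Z"] sp by (simp add: Re_hs_inner orthogonal_def inner_commute)
    then have 2: "Im (hs_inner Z z) = 0" by (simp add: hs_inner_msc_left)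
    show ?thesis using 1 2 \<open>X - y = z\<close> by (simp add: complex_eq_iff)
  qed
  then show ?thesis using y sp by blast
qed

lemma op_unique:
  assumes V: "csubspace V" and "Y1 \<in> V" "\<forall>Z\<in>V. hs_inner Z (X - Y1) = 0"
    and "Y2 \<in> V" "\<forall>Z\<in>V. hs_inner Z (X - Y2) = 0"
  shows "Y1 = Y2"
proof -
  have D: "Y1 - Y2 \<in> V" using assms csubspace_diff by blast
  have "hs_inner (Y1 - Y2) (X - Y2) - hs_inner (Y1 - Y2) (X - Y1) = 0" using assms D by simp
  then have "hs_inner (Y1 - Y2) (Y1 - Y2) = 0" by (simp add: hs_inner_diff_right)
  then show ?thesis using hs_inner_self_eq0 by fastforce
qed

lemma op_props:
  assumes V: "csubspace V"
  shows "orth_proj V X \<in> V \<and> (\<forall>Z\<in>V. hs_inner Z (X - orth_proj V X) = 0)"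
proof -
  have "\<exists>!Y. Y \<in> V \<and> (\<forall>Z\<in>V. hs_inner Z (X - Y) = 0)"
    using op_ex[OF V] op_unique[OF V] by metis
  then show ?thesis unfolding orth_proj_def by (rule theI')
qed

lemma op_in: "csubspace V \<Longrightarrow> orth_proj V X \<in> V"
  using op_props by blast
lemma op_orth: "csubspace V \<Longrightarrow> Z \<in> V \<Longrightarrow> hs_inner Z (X - orth_proj V X) = 0"
  using op_props by blast
lemma op_char: "csubspace V \<Longrightarrow> Y \<in> V \<Longrightarrow> (\<forall>Z\<in>V. hs_inner Z (X - Y) = 0) \<Longrightarrow> orth_proj V X = Y"
  using op_props op_unique by metis

lemma op_fix: "csubspace V \<Longrightarrow> Y \<in> V \<Longrightarrow> orth_proj V Y = Y"
  by (rule op_char) auto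

lemma op_add: "csubspace V \<Longrightarrow> orth_proj V (X + Y) = orth_proj V X + orth_proj V Y"
  apply (rule op_char, simp)
   apply (simp add: csubspace_add op_in)
  apply (metis (no_types, lifting) add_diff_add hs_inner_add_right op_orth add_0)
  done

lemma op_msc: "csubspace V \<Longrightarrow> orth_proj V (msc c X) = msc c (orth_proj V X)"
proof (rule op_char)
  assume V: "csubspace V"
  show "msc c (orth_proj V X) \<in> V" by (simp add: V csubspace_msc op_in)
  have "msc c X - msc c (orth_proj V X) = msc c (X - orth_proj V X)" by (simp add: vec_eq_iff algebra_simps)
  then show "\<forall>Z\<in>V. hs_inner Z (msc c X - msc c (orth_proj V X)) = 0"
    by (simp add: hs_inner_msc_right op_orth V)
qed

lemma op_zero: "csubspace V \<Longrightarrow> orth_proj V 0 = 0"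
  by (simp add: csubspace_0 op_fix)

lemma op_sum: "csubspace V \<Longrightarrow> orth_proj V (sum f S) = (\<Sum>i\<in>S. orth_proj V (f i))"
  by (induction S rule: infinite_finite_induct) (auto simp: op_zero op_add)

lemma op_idem: "csubspace V \<Longrightarrow> orth_proj V (orth_proj V X) = orth_proj V X"
  by (simp add: op_fix op_in)

lemma op_sym1: "csubspace V \<Longrightarrow> hs_inner X (orth_proj V Y) = hs_inner (orth_proj V X) (orth_proj V Y)"
proof -
  assume V: "csubspace V"
  have "hs_inner (orth_proj V Y) (X - orth_proj V X) = 0" by (simp add: V op_in op_orth)
  then have "hs_inner (X - orth_proj V X) (orth_proj V Y) = 0" by (metis complex_cnj_zero hs_inner_commute)
  then show ?thesis by (simp add: hs_inner_diff_left)
qed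

lemma op_sym: "csubspace V \<Longrightarrow> hs_inner X (orth_proj V Y) = hs_inner (orth_proj V X) Y"
  by (metis hs_inner_commute op_sym1)

lemma sum_delta2: "(\<Sum>c\<in>(UNIV::'a::finite set). \<Sum>d\<in>(UNIV::'b::finite set). (f c d::complex) * (if i = c \<and> j = d then 1 else 0)) = f i j"
proof -
  have "(\<Sum>d\<in>(UNIV::'b set). f c d * (if i = c \<and> j = d then 1 else 0)) = (if c = i then f c j else 0)" for c
    by (cases "c = i") (simp_all add: of_bool_def[symmetric])
  then show ?thesis by simp
qed

lemma mat_decomp: "X = (\<Sum>c\<in>UNIV. \<Sum>d\<in>UNIV. msc (X$c$d) (munit c d))"
proof -
  have "(\<Sum>c\<in>UNIV. \<Sum>d\<in>UNIV. msc (X$c$d) (munit c d)) $ i $ j = X $ i $ j" for i j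
  proof -
    have "(\<Sum>c\<in>UNIV. \<Sum>d\<in>UNIV. msc (X$c$d) (munit c d)) $ i $ j
        = (\<Sum>c\<in>UNIV. \<Sum>d\<in>UNIV. X$c$d * (if i = c \<and> j = d then 1 else 0))"
      by (simp add: sum_component)
    also have "\<dots> = X$i$j"
      by (rule sum_delta2)
    finally show ?thesis .
  qed
  then show ?thesis by (simp add: vec_eq_iff)
qed

lemma op_entry: "csubspace V \<Longrightarrow>
  orth_proj V X $ a $ b = (\<Sum>c\<in>UNIV. \<Sum>d\<in>UNIV. X$c$d * orth_proj V (munit c d) $ a $ b)"
proof -
  assume V: "csubspace V"
  have "orth_proj V X = orth_proj V (\<Sum>c\<in>UNIV. \<Sum>d\<in>UNIV. msc (X$c$d) (munit c d))"
    using mat_decomp[of X] by simp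
  also have "\<dots> = (\<Sum>c\<in>UNIV. \<Sum>d\<in>UNIV. msc (X$c$d) (orth_proj V (munit c d)))"
    by (simp add: V op_sum op_msc)
  finally show ?thesis by (simp add: sum_component)
qed

lemma hs_inner_munit: "hs_inner (munit a b) X = X $ a $ b"
proof -
  have "\<And>i j. cnj (munit a b $ i $ j) * X$i$j = X$i$j * (if a = i \<and> b = j then 1 else 0)" by auto
  then show ?thesis unfolding hs_inner_alt by (simp only: sum_delta2)
qed

lemma op_kernel_gram: "csubspace V \<Longrightarrow> orth_proj V (munit c d) $ a $ b =
   (\<Sum>p\<in>UNIV. \<Sum>q\<in>UNIV. cnj (orth_proj V (munit a b) $ p $ q) * orth_proj V (munit c d) $ p $ q)"
proof -
  assume V: "csubspace V"
  have "orth_proj V (munit c d) $ a $ b = hs_inner (munit a b) (orth_proj V (munit c d))"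
    by (simp add: hs_inner_munit)
  also have "\<dots> = hs_inner (orth_proj V (munit a b)) (orth_proj V (munit c d))"
    by (rule op_sym1[OF V])
  finally show ?thesis by (simp add: hs_inner_alt)
qed



lemma L2: "(\<Sum>t\<in>A. \<Sum>w\<in>C. \<Sum>\<rho>\<in>D. f t w \<rho>) = (\<Sum>w\<in>C. \<Sum>\<rho>\<in>D. \<Sum>t\<in>A. (f t w \<rho>::complex))"
  by (subst sum.swap) (rule sum.cong[OF refl], rule sum.swap)

lemma L3: "(\<Sum>t\<in>A. \<Sum>u\<in>B. \<Sum>w\<in>C. \<Sum>\<rho>\<in>D. f t u w \<rho>) = (\<Sum>u\<in>B. \<Sum>w\<in>C. \<Sum>\<rho>\<in>D. \<Sum>t\<in>A. (f t u w \<rho>::complex))"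
  by (subst sum.swap) (rule sum.cong[OF refl], rule L2)

lemma gram_term:
  fixes x y :: "'i::finite \<Rightarrow> complex" and a :: "'i \<Rightarrow> 'i \<Rightarrow> complex" and G :: "'r::finite \<Rightarrow> 'i \<Rightarrow> 'i \<Rightarrow> complex"
  shows "(\<Sum>s\<in>UNIV. cnj (x s) * (\<Sum>t\<in>UNIV. (\<Sum>u\<in>UNIV. \<Sum>w\<in>UNIV. (\<Sum>\<rho>\<in>UNIV. cnj (G \<rho> u t) * G \<rho> w s) * a w u) * y t))
    = (\<Sum>\<rho>\<in>UNIV. \<Sum>w\<in>UNIV. cnj (\<Sum>s\<in>UNIV. cnj (G \<rho> w s) * x s) * (\<Sum>u\<in>UNIV. a w u * (\<Sum>t\<in>UNIV. cnj (G \<rho> u t) * y t)))"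
proof -
  let ?yy = "\<lambda>\<rho> u. (\<Sum>t\<in>UNIV. cnj (G \<rho> u t) * y t)"
  let ?xx = "\<lambda>\<rho> w. (\<Sum>s\<in>UNIV. cnj (G \<rho> w s) * x s)"
  have A: "(\<Sum>t\<in>UNIV. (\<Sum>u\<in>UNIV. \<Sum>w\<in>UNIV. (\<Sum>\<rho>\<in>UNIV. cnj (G \<rho> u t) * G \<rho> w s) * a w u) * y t)
      = (\<Sum>u\<in>UNIV. \<Sum>w\<in>UNIV. \<Sum>\<rho>\<in>UNIV. G \<rho> w s * a w u * ?yy \<rho> u)" for s
    apply (simp add: sum_distrib_left sum_distrib_right)
    apply (rule trans[OF L3])
    apply (simp add: mult_ac)
    done
  have B: "(\<Sum>s\<in>UNIV. cnj (x s) * (\<Sum>u\<in>UNIV. \<Sum>w\<in>UNIV. \<Sum>\<rho>\<in>UNIV. G \<rho> w s * a w u * ?yy \<rho> u))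
      = (\<Sum>u\<in>UNIV. \<Sum>w\<in>UNIV. \<Sum>\<rho>\<in>UNIV. cnj (?xx \<rho> w) * a w u * ?yy \<rho> u)"
    apply (simp only: sum_distrib_left cnj_sum sum_distrib_right complex_cnj_mult complex_cnj_cnj)
    apply (rule trans[OF L3])
    apply (rule sum.cong[OF refl], rule sum.cong[OF refl], rule sum.cong[OF refl])
    apply (subst sum.swap)
    apply (simp add: mult_ac)
    done
  have C: "(\<Sum>u\<in>UNIV. \<Sum>w\<in>UNIV. \<Sum>\<rho>\<in>UNIV. cnj (?xx \<rho> w) * a w u * ?yy \<rho> u)
     = (\<Sum>\<rho>\<in>UNIV. \<Sum>w\<in>UNIV. \<Sum>u\<in>UNIV. cnj (?xx \<rho> w) * a w u * ?yy \<rho> u)"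
    apply (subst sum.swap)
    apply (subst L2)
    apply (rule refl)
    done
  have D: "(\<Sum>\<rho>\<in>UNIV. \<Sum>w\<in>UNIV. \<Sum>u\<in>UNIV. cnj (?xx \<rho> w) * a w u * ?yy \<rho> u)
     = (\<Sum>\<rho>\<in>UNIV. \<Sum>w\<in>UNIV. cnj (?xx \<rho> w) * (\<Sum>u\<in>UNIV. a w u * ?yy \<rho> u))"
    by (simp only: sum_distrib_left mult.assoc)
  show ?thesis
    apply (subst A)
    using B C D by simp
qed


lemma cp_gram:
  fixes \<Phi> :: "complex^'i::finite^'i \<Rightarrow> complex^'i^'i" and G :: "'r::finite \<Rightarrow> 'i \<Rightarrow> 'i \<Rightarrow> complex"
  assumes \<Phi>: "\<And>X s t. \<Phi> X $ s $ t = (\<Sum>u\<in>UNIV. \<Sum>w\<in>UNIV. (\<Sum>\<rho>\<in>UNIV. cnj (G \<rho> u t) * G \<rho> w s) * X$w$u)"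
  shows "cp_on A \<Phi>"
  unfolding cp_on_def block_pos_def
proof (intro allI impI)
  fix r and a :: "nat \<Rightarrow> nat \<Rightarrow> complex^'i^'i" and v :: "nat \<Rightarrow> complex^'i"
  assume bp: "\<forall>v :: nat \<Rightarrow> complex^'i. Im (\<Sum>i<r. \<Sum>j<r. cinner (v i) (a i j *v v j)) = 0 \<and>
       0 \<le> Re (\<Sum>i<r. \<Sum>j<r. cinner (v i) (a i j *v v j))"
  define \<xi> where "\<xi> \<rho> i = (\<chi> u. \<Sum>t\<in>UNIV. cnj (G \<rho> u t) * v i $ t)" for \<rho> i
  have tm: "cinner (v i) (\<Phi> (a i j) *v v j) = (\<Sum>\<rho>\<in>UNIV. cinner (\<xi> \<rho> i) (a i j *v \<xi> \<rho> j))" for i j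
    unfolding cinner_def \<xi>_def
    using gram_term[of "\<lambda>s. v i $ s" G "\<lambda>w u. a i j $ w $ u" "\<lambda>t. v j $ t"]
    by (simp add: matrix_vector_mult_def \<Phi>)
  have S: "(\<Sum>i<r. \<Sum>j<r. cinner (v i) (\<Phi> (a i j) *v v j)) = (\<Sum>\<rho>\<in>UNIV. \<Sum>i<r. \<Sum>j<r. cinner (\<xi> \<rho> i) (a i j *v \<xi> \<rho> j))"
    unfolding tm by (rule L2[symmetric])
  show "Im (\<Sum>i<r. \<Sum>j<r. cinner (v i) (\<Phi> (a i j) *v v j)) = 0 \<and>
       0 \<le> Re (\<Sum>i<r. \<Sum>j<r. cinner (v i) (\<Phi> (a i j) *v v j))"
    unfolding S Im_sum Re_sum using bp by (simp add: sum_nonneg)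
qed



lemma if_mult_delta: "(x::complex) * (if P then 1 else 0) = (if P then x else 0)"
  by simp
lemma mult_if_0: "(a::complex) * (if P then x else 0) = (if P then a * x else 0)"
  by simp
lemma if_conj_0: "(if P \<and> Q then (x::complex) else 0) = (if P then (if Q then x else 0) else 0)"
  by simp
lemma sum_if_const: "(\<Sum>x\<in>A. if P then f x else (0::complex)) = (if P then (\<Sum>x\<in>A. f x) else 0)"
  by simp

lemmas delta_simps = if_mult_delta mult_if_0 if_conj_0 sum_if_const

lemma pi4_munit: "pi4 T (munit (b,f) (c,g)) $ (a,e) $ (d,h) = T$(a,c,e,g)$(b,d,f,h)"
  by (simp add: pi4_def delta_simps cong del: if_weak_cong)

lemma test_emb: "ptr13 (mult4 T (emb4 X)) $ (c,g) $ (d,h) = (\<Sum>a\<in>UNIV. \<Sum>e\<in>UNIV. \<Sum>x\<in>UNIV. \<Sum>z\<in>UNIV. T$(a,c,e,g)$(x,d,z,h) * X$(x,z)$(a,e))"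
  by (simp add: ptr13_def mult4_def emb4_def delta_simps cong del: if_weak_cong)


lemma P_V_eq:
  assumes V: "csubspace V"
  shows "P_V V = vec_lambda (\<lambda>(a,c,e,g). vec_lambda (\<lambda>(b,d,f,h).
            orth_proj V (munit (b,f) (c,g)) $ (a,e) $ (d,h)))" (is "_ = ?T")
proof -
  have 1: "pi4 ?T = orth_proj V"
  proof (rule ext)
    fix S
    have "pi4 ?T S $ (a,e) $ (d,h) = orth_proj V S $ (a,e) $ (d,h)" for a e d h
    proof -
      have "pi4 ?T S $ (a,e) $ (d,h) = (\<Sum>b\<in>UNIV. \<Sum>c\<in>UNIV. \<Sum>f\<in>UNIV. \<Sum>g\<in>UNIV.
          orth_proj V (munit (b,f) (c,g)) $ (a,e) $ (d,h) * S$(b,f)$(c,g))"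
        by (simp add: pi4_def)
      also have "\<dots> = (\<Sum>b\<in>UNIV. \<Sum>f\<in>UNIV. \<Sum>c\<in>UNIV. \<Sum>g\<in>UNIV.
          S$(b,f)$(c,g) * orth_proj V (munit (b,f) (c,g)) $ (a,e) $ (d,h))"
        by (rule sum.cong[OF refl], subst sum.swap) (simp add: mult.commute)
      also have "\<dots> = orth_proj V S $ (a,e) $ (d,h)"
        by (subst op_entry[OF V, of S]) (simp add: sum_UNIV_prod)
      finally show ?thesis .
    qed
    then show "pi4 ?T S = orth_proj V S" by (simp add: vec_eq_iff split_paired_All)
  qed
  have 2: "T = ?T" if "pi4 T = orth_proj V" for T
  proof -
    have "T$(a,c,e,g)$(b,d,f,h) = ?T$(a,c,e,g)$(b,d,f,h)" for a c e g b d f h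
      using pi4_munit[of T b f c g a e d h] that by simp
    then show ?thesis by (simp add: vec_eq_iff split_paired_All)
  qed
  show ?thesis unfolding P_V_def using 1 2 by (rule the_equality)
qed

lemma A_PV_formula:
  assumes V: "csubspace V"
  shows "A_PV V X $ s $ t = (\<Sum>u\<in>UNIV. \<Sum>w\<in>UNIV. orth_proj V (munit w s) $ u $ t * X $ w $ u)"
proof -
  obtain c g where s: "s = (c,g)" by force
  obtain d h where t: "t = (d,h)" by force
  show ?thesis unfolding s t A_PV_def test_emb P_V_eq[OF V]
    by (simp add: sum_UNIV_prod)
qed

lemma pi2_munit: "pi2 T (munit b c) $ a $ d = T$(a,c)$(b,d)"
  by (simp add: pi2_def delta_simps cong del: if_weak_cong)

lemma pi2_eq:
  assumes V: "csubspace V"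
  shows "(THE T. pi2 T = orth_proj V) = vec_lambda (\<lambda>(a,c). vec_lambda (\<lambda>(b,d).
            orth_proj V (munit b c) $ a $ d))" (is "_ = ?T")
proof -
  have 1: "pi2 ?T = orth_proj V"
  proof (rule ext)
    fix S
    have "pi2 ?T S $ a $ d = orth_proj V S $ a $ d" for a d
      by (subst op_entry[OF V, of S]) (simp add: pi2_def mult.commute)
    then show "pi2 ?T S = orth_proj V S" by (simp add: vec_eq_iff)
  qed
  have 2: "T = ?T" if "pi2 T = orth_proj V" for T
  proof -
    have "T$(a,c)$(b,d) = ?T$(a,c)$(b,d)" for a c b d
      using pi2_munit[of T b c a d] that by simp
    then show ?thesis by (simp add: vec_eq_iff split_paired_All)
  qed
  show ?thesis using 1 2 by (rule the_equality)
qed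

lemma ptr1_emb2: "ptr1 (mult2 T (emb2 m)) $ c $ d = (\<Sum>a\<in>UNIV. \<Sum>x\<in>UNIV. T$(a,c)$(x,d) * m$x$a)"
  by (simp add: ptr1_def mult2_def emb2_def delta_simps cong del: if_weak_cong)

lemma ptrK_add: "ptrK (X + Y) = ptrK X + ptrK Y"
  by (simp add: vec_eq_iff ptrK_def sum.distrib)
lemma ptrK_msc: "ptrK (msc c X) = msc c (ptrK X)"
  by (simp add: vec_eq_iff ptrK_def sum_distrib_left)
lemma ptrK_0: "ptrK 0 = 0"
  by (simp add: vec_eq_iff ptrK_def)

lemma csubspace_V_tilde: "csubspace V \<Longrightarrow> csubspace (V_tilde V)"
proof -
  assume V: "csubspace V"
  have "0 \<in> V_tilde V" unfolding V_tilde_def using csubspace_0[OF V] ptrK_0 by (metis image_eqI)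
  moreover have "x + y \<in> V_tilde V" if xy: "x \<in> V_tilde V" "y \<in> V_tilde V" for x y
  proof -
    obtain X Y where "X \<in> V" "Y \<in> V" "x = ptrK X" "y = ptrK Y" using xy unfolding V_tilde_def by blast
    then show ?thesis unfolding V_tilde_def using csubspace_add[OF V] ptrK_add by (metis image_eqI)
  qed
  moreover have "msc c x \<in> V_tilde V" if x: "x \<in> V_tilde V" for x c
  proof -
    obtain X where "X \<in> V" "x = ptrK X" using x unfolding V_tilde_def by blast
    then show ?thesis unfolding V_tilde_def using csubspace_msc[OF V] ptrK_msc by (metis image_eqI)
  qed
  ultimately show ?thesis unfolding csubspace_def by blast
qed

lemma A_PVt_formula:
  assumes V: "csubspace V"
  shows "A_PVt V X $ s $ t = (\<Sum>u\<in>UNIV. \<Sum>w\<in>UNIV. orth_proj (V_tilde V) (munit w s) $ u $ t * X $ w $ u)"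
  unfolding A_PVt_def P_Vt_def pi2_eq[OF csubspace_V_tilde[OF V]] ptr1_emb2
  by simp

lemma op_kernel_gram':
  assumes V: "csubspace V"
  shows "orth_proj V (munit w s) $ u $ t = (\<Sum>\<rho>\<in>UNIV. cnj (orth_proj V (munit u t) $ fst \<rho> $ snd \<rho>) *
       orth_proj V (munit w s) $ fst \<rho> $ snd \<rho>)"
  by (subst op_kernel_gram[OF V, of w s u t]) (simp add: sum_UNIV_prod)

lemma cp_from_kernel:
  assumes V: "csubspace V"
    and \<Phi>: "\<And>X s t. \<Phi> X $ s $ t = (\<Sum>u\<in>UNIV. \<Sum>w\<in>UNIV. orth_proj V (munit w s) $ u $ t * X $ w $ u)"
  shows "cp_on A \<Phi>"
proof (rule cp_gram[where G = "\<lambda>\<rho> w s. orth_proj V (munit w s) $ fst \<rho> $ snd \<rho>"])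
  fix X s t
  have "\<Phi> X $ s $ t = (\<Sum>u\<in>UNIV. \<Sum>w\<in>UNIV. orth_proj V (munit w s) $ u $ t * X $ w $ u)" by (rule \<Phi>)
  also have "\<dots> = (\<Sum>u\<in>UNIV. \<Sum>w\<in>UNIV. (\<Sum>\<rho>\<in>UNIV. cnj (orth_proj V (munit u t) $ fst \<rho> $ snd \<rho>) *
       orth_proj V (munit w s) $ fst \<rho> $ snd \<rho>) * X $ w $ u)"
    by (rule sum.cong[OF refl], rule sum.cong[OF refl], subst op_kernel_gram'[OF V], rule refl)
  finally show "\<Phi> X $ s $ t = (\<Sum>u\<in>UNIV. \<Sum>w\<in>UNIV. (\<Sum>\<rho>\<in>UNIV. cnj (orth_proj V (munit u t) $ fst \<rho> $ snd \<rho>) *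
       orth_proj V (munit w s) $ fst \<rho> $ snd \<rho>) * X $ w $ u)" .
qed

lemma cp_A_PV: "csubspace V \<Longrightarrow> cp_on A (A_PV V)"
  by (rule cp_from_kernel) (auto simp: A_PV_formula)

lemma cp_A_PVt: "csubspace V \<Longrightarrow> cp_on A (A_PVt V)"
  by (rule cp_from_kernel[where V = "V_tilde V"]) (auto simp: A_PVt_formula csubspace_V_tilde)



lemma mat1_nth: "(mat 1 :: complex^'i^'i) $ k $ l = (if k = l then 1 else 0)"
  by (simp add: mat_def)

lemma cnj_if_0: "cnj (if P then x else 0) = (if P then cnj x else 0)" by simp
lemma if_0_mult: "(if P then (x::complex) else 0) * y = (if P then x * y else 0)" by simp
lemmas delta_simps2 = delta_simps cnj_if_0 if_0_mult

lemma F_sum: "kron (munit w s) (mat 1) = (\<Sum>f\<in>UNIV. munit (w,f) (s,f))"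
proof -
  have "kron (munit w s) (mat 1) $ (i,k) $ (j,l) = (\<Sum>f\<in>UNIV. munit (w,f) (s,f)) $ (i,k) $ (j,l)" for i k j l
    by (simp add: sum_component mat1_nth delta_simps cong del: if_weak_cong)
  then show ?thesis unfolding vec_eq_iff split_paired_All by blast
qed

lemma hs_inner_F: "hs_inner (kron (munit u t) (mat 1)) Y = (\<Sum>e\<in>UNIV. Y $ (u,e) $ (t,e))"
  by (simp add: hs_inner_alt sum_UNIV_prod mat1_nth delta_simps2 cong del: if_weak_cong)

lemma S_V_entry: "csubspace V \<Longrightarrow> S_V V $ (a,c) $ (b,d) =
   (\<Sum>e\<in>UNIV. \<Sum>f\<in>UNIV. orth_proj V (munit (b,f) (c,f)) $ (a,e) $ (d,e))"
  by (simp add: S_V_def ptr3_def id_id_mult_def P_V_eq)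

lemma S_V_gram:
  assumes V: "csubspace V"
  shows "S_V V $ (u,s) $ (w,t) = (\<Sum>\<rho>\<in>UNIV. cnj (orth_proj V (kron (munit u t) (mat 1)) $ fst \<rho> $ snd \<rho>) *
       orth_proj V (kron (munit w s) (mat 1)) $ fst \<rho> $ snd \<rho>)"
proof -
  have "S_V V $ (u,s) $ (w,t) = (\<Sum>e\<in>UNIV. orth_proj V (kron (munit w s) (mat 1)) $ (u,e) $ (t,e))"
    by (simp add: S_V_entry[OF V] F_sum op_sum[OF V] sum_component)
  also have "\<dots> = hs_inner (kron (munit u t) (mat 1)) (orth_proj V (kron (munit w s) (mat 1)))"
    by (simp add: hs_inner_F)
  also have "\<dots> = hs_inner (orth_proj V (kron (munit u t) (mat 1))) (orth_proj V (kron (munit w s) (mat 1)))"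
    by (rule op_sym1[OF V])
  finally show ?thesis by (simp add: hs_inner_alt sum_UNIV_prod)
qed

lemma cp_A_SV:
  assumes V: "csubspace V"
  shows "cp_on A (A_SV V)"
proof (rule cp_gram[where G = "\<lambda>\<rho> w s. orth_proj V (kron (munit w s) (mat 1)) $ fst \<rho> $ snd \<rho>"])
  fix X s t
  show "A_SV V X $ s $ t = (\<Sum>u\<in>UNIV. \<Sum>w\<in>UNIV. (\<Sum>\<rho>\<in>UNIV. cnj (orth_proj V (kron (munit u t) (mat 1)) $ fst \<rho> $ snd \<rho>) *
       orth_proj V (kron (munit w s) (mat 1)) $ fst \<rho> $ snd \<rho>) * X $ w $ u)"
    unfolding A_SV_def ptr1_emb2 S_V_gram[OF V] by simp
qed



lemma csubspace_Inter: "(\<And>T. T \<in> F \<Longrightarrow> csubspace T) \<Longrightarrow> csubspace (\<Inter>F)"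
  unfolding csubspace_def by blast

lemma cspan_csubspace: "csubspace (cspan S)"
  unfolding cspan_def by (rule csubspace_Inter) blast

lemma cspan_superset: "x \<in> S \<Longrightarrow> x \<in> cspan S"
  unfolding cspan_def by blast

lemma alg_tensor_csubspace: "csubspace (alg_tensor A B)"
  unfolding alg_tensor_def by (rule cspan_csubspace)

lemma kron_in_alg_tensor: "x \<in> A \<Longrightarrow> y \<in> B \<Longrightarrow> kron x y \<in> alg_tensor A B"
  unfolding alg_tensor_def by (rule cspan_superset) blast

definition wB :: "complex^'i^'i \<Rightarrow> complex^('i::finite\<times>'i)^('i\<times>'i)" where
  "wB z = vec_lambda (\<lambda>(i,k). vec_lambda (\<lambda>(j,l). if j = k then z$i$l else 0))"

lemma wB_nth: "wB z $ (i,k) $ (j,l) = (if j = k then z$i$l else 0)"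
  by (simp add: wB_def)

lemma mmult_nth': "mmult W $ i $ j = (\<Sum>k\<in>UNIV. W$(i,k)$(k,j))"
  by (simp add: mmult_def)

lemma wB_prop: "hs_inner (wB z) u = hs_inner z (mmult u)"
proof -
  have "hs_inner (wB z) u = (\<Sum>i\<in>UNIV. \<Sum>k\<in>UNIV. \<Sum>l\<in>UNIV. cnj (z$i$l) * u$(i,k)$(k,l))"
    by (simp add: hs_inner_alt sum_UNIV_prod wB_nth delta_simps2 cong del: if_weak_cong)
  also have "\<dots> = (\<Sum>i\<in>UNIV. \<Sum>l\<in>UNIV. \<Sum>k\<in>UNIV. cnj (z$i$l) * u$(i,k)$(k,l))"
    by (rule sum.cong[OF refl], rule sum.swap)
  also have "\<dots> = hs_inner z (mmult u)"
    by (simp add: hs_inner_alt mmult_nth' sum_distrib_left)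
  finally show ?thesis .
qed

lemma mstar_props:
  fixes A :: "(complex^'i::finite^'i) set"
  shows "mstar A z \<in> alg_tensor A A \<and> (\<forall>K\<in>alg_tensor A A. hs_inner K (mstar A z) = hs_inner K (wB z))"
proof -
  let ?AA = "alg_tensor A A"
  have S: "csubspace ?AA" by (rule alg_tensor_csubspace)
  let ?w = "orth_proj ?AA (wB z)"
  have w1: "?w \<in> ?AA" by (rule op_in[OF S])
  have w2: "hs_inner K ?w = hs_inner K (wB z)" if "K \<in> ?AA" for K
    using op_orth[OF S that, of "wB z"] by (simp add: hs_inner_diff_right)
  have w3: "hs_inner ?w u = hs_inner z (mmult u)" if "u \<in> ?AA" for u
  proof -
    have "hs_inner ?w u = cnj (hs_inner u ?w)" by (rule hs_inner_commute)
    also have "\<dots> = cnj (hs_inner u (wB z))" using w2[OF that] by simp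
    also have "\<dots> = hs_inner (wB z) u" by (simp add: hs_inner_commute[of u])
    finally show ?thesis by (simp add: wB_prop)
  qed
  have uniq: "w = ?w" if "w \<in> ?AA" "\<forall>u\<in>?AA. hs_inner w u = hs_inner z (mmult u)" for w
  proof -
    have D: "w - ?w \<in> ?AA" using that(1) w1 S csubspace_diff by blast
    have "hs_inner (w - ?w) (w - ?w) = 0"
      using that(2) w3 D by (simp add: hs_inner_diff_left)
    then show ?thesis using hs_inner_self_eq0 by fastforce
  qed
  have "mstar A z = ?w" unfolding mstar_def
  proof (rule the_equality)
    show "?w \<in> ?AA \<and> (\<forall>u\<in>?AA. hs_inner ?w u = hs_inner z (mmult u))" using w1 w3 by blast
  next
    fix w assume "w \<in> ?AA \<and> (\<forall>u\<in>?AA. hs_inner w u = hs_inner z (mmult u))"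
    then show "w = ?w" using uniq by blast
  qed
  then show ?thesis using w1 w2 by simp
qed

lemma tmap_nth: "tmap \<Phi> W $ (a,a') $ (b,b') = (\<Sum>p\<in>UNIV. \<Sum>q\<in>UNIV. \<Sum>r\<in>UNIV. \<Sum>s\<in>UNIV.
    W$(p,r)$(q,s) * (\<Phi> (munit p q) $ a $ b * \<Phi> (munit r s) $ a' $ b'))"
  by (simp add: tmap_def sum_component)

lemma phi_munit:
  assumes \<Phi>: "\<And>X s t. \<Phi> X $ s $ t = (\<Sum>u\<in>UNIV. \<Sum>w\<in>UNIV. orth_proj V (munit w s) $ u $ t * X$w$u)"
  shows "\<Phi> (munit p q) $ a $ b = orth_proj V (munit p a) $ q $ b"
  unfolding \<Phi> by (simp add: delta_simps2 cong del: if_weak_cong)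


definition Rk :: "(complex^'i^'i) set \<Rightarrow> 'i \<Rightarrow> 'i \<Rightarrow> complex^'i::finite^'i" where
  "Rk V a b = (\<chi> u w. orth_proj V (munit w a) $ u $ b)"

lemma tmap_eq_hs:
  assumes \<Phi>: "\<And>X s t. \<Phi> X $ s $ t = (\<Sum>u\<in>UNIV. \<Sum>w\<in>UNIV. orth_proj V (munit w s) $ u $ t * X$w$u)"
  shows "tmap \<Phi> W $ (a,a') $ (b,b') = hs_inner (kron (madj (Rk V a b)) (madj (Rk V a' b'))) W"
proof -
  have "tmap \<Phi> W $ (a,a') $ (b,b') = (\<Sum>p\<in>UNIV. \<Sum>q\<in>UNIV. \<Sum>r\<in>UNIV. \<Sum>s\<in>UNIV.
    W$(p,r)$(q,s) * (orth_proj V (munit p a) $ q $ b * orth_proj V (munit r a') $ s $ b'))"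
    by (simp add: tmap_nth phi_munit[OF \<Phi>])
  also have "\<dots> = (\<Sum>p\<in>UNIV. \<Sum>r\<in>UNIV. \<Sum>q\<in>UNIV. \<Sum>s\<in>UNIV.
    W$(p,r)$(q,s) * (orth_proj V (munit p a) $ q $ b * orth_proj V (munit r a') $ s $ b'))"
    by (rule sum.cong[OF refl], rule sum.swap)
  also have "\<dots> = hs_inner (kron (madj (Rk V a b)) (madj (Rk V a' b'))) W"
    by (simp add: hs_inner_alt sum_UNIV_prod Rk_def mult_ac)
  finally show ?thesis .
qed

lemma L3': "(\<Sum>t\<in>A. \<Sum>u\<in>B. \<Sum>w\<in>C. \<Sum>\<rho>\<in>D. f t u w \<rho>) = (\<Sum>u\<in>B. \<Sum>w\<in>C. \<Sum>\<rho>\<in>D. \<Sum>t\<in>A. (f t u w \<rho>::complex))"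
  by (rule L3)

lemma schur_BH:
  assumes V: "csubspace V"
    and \<Phi>: "\<And>X s t. \<Phi> X $ s $ t = (\<Sum>u\<in>UNIV. \<Sum>w\<in>UNIV. orth_proj V (munit w s) $ u $ t * X$w$u)"
  shows "mmult (tmap \<Phi> (wB z)) = \<Phi> z"
proof -
  let ?P = "\<lambda>p i. orth_proj V (munit p i)"
  have "mmult (tmap \<Phi> (wB z)) $ i $ j = \<Phi> z $ i $ j" for i j
  proof -
    have "mmult (tmap \<Phi> (wB z)) $ i $ j = (\<Sum>k\<in>UNIV. \<Sum>p\<in>UNIV. \<Sum>q\<in>UNIV. \<Sum>s\<in>UNIV.
          z$p$s * (?P p i $ q $ k * ?P q k $ s $ j))"
      by (simp add: mmult_nth' tmap_nth phi_munit[OF \<Phi>] wB_nth delta_simps2 cong del: if_weak_cong)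
    also have "\<dots> = (\<Sum>p\<in>UNIV. \<Sum>q\<in>UNIV. \<Sum>s\<in>UNIV. \<Sum>k\<in>UNIV.
          z$p$s * (?P p i $ q $ k * ?P q k $ s $ j))"
      by (rule L3)
    also have "\<dots> = (\<Sum>p\<in>UNIV. \<Sum>s\<in>UNIV. \<Sum>q\<in>UNIV. \<Sum>k\<in>UNIV.
          z$p$s * (?P p i $ q $ k * ?P q k $ s $ j))"
      by (rule sum.cong[OF refl], rule sum.swap)
    also have "\<dots> = (\<Sum>p\<in>UNIV. \<Sum>s\<in>UNIV. z$p$s * (\<Sum>q\<in>UNIV. \<Sum>k\<in>UNIV. ?P p i $ q $ k * ?P q k $ s $ j))"
      by (simp add: sum_distrib_left)
    also have "\<dots> = (\<Sum>p\<in>UNIV. \<Sum>s\<in>UNIV. z$p$s * ?P p i $ s $ j)"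
    proof -
      have "(\<Sum>q\<in>UNIV. \<Sum>k\<in>UNIV. ?P p i $ q $ k * ?P q k $ s $ j) = ?P p i $ s $ j" for p s
      proof -
        have "(\<Sum>q\<in>UNIV. \<Sum>k\<in>UNIV. ?P p i $ q $ k * ?P q k $ s $ j) = orth_proj V (?P p i) $ s $ j"
          by (rule op_entry[OF V, symmetric])
        then show ?thesis by (simp add: op_idem[OF V])
      qed
      then show ?thesis by simp
    qed
    also have "\<dots> = \<Phi> z $ i $ j"
      unfolding \<Phi> by (subst sum.swap) (simp add: mult.commute)
    finally show ?thesis .
  qed
  then show ?thesis by (simp add: vec_eq_iff)
qed

lemma schur_gen:
  fixes A :: "(complex^'i::finite^'i) set"
  assumes V: "csubspace V"
    and \<Phi>: "\<And>X s t. \<Phi> X $ s $ t = (\<Sum>u\<in>UNIV. \<Sum>w\<in>UNIV. orth_proj V (munit w s) $ u $ t * X$w$u)"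
    and R: "\<And>a b. madj (Rk V a b) \<in> A"
  shows "schur_idempotent A \<Phi>"
  unfolding schur_idempotent_def
proof (intro ballI)
  fix z assume "z \<in> A"
  have "tmap \<Phi> (mstar A z) $ x $ y = tmap \<Phi> (wB z) $ x $ y" for x y
  proof -
    obtain a a' where x: "x = (a,a')" by force
    obtain b b' where y: "y = (b,b')" by force
    have K: "kron (madj (Rk V a b)) (madj (Rk V a' b')) \<in> alg_tensor A A"
      by (rule kron_in_alg_tensor[OF R R])
    show ?thesis unfolding x y tmap_eq_hs[OF \<Phi>] using mstar_props K by blast
  qed
  then have "tmap \<Phi> (mstar A z) = tmap \<Phi> (wB z)" by (simp add: vec_eq_iff)
  then show "mmult (tmap \<Phi> (mstar A z)) = \<Phi> z" using schur_BH[OF V \<Phi>] by simp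
qed



lemma madj_madj[simp]: "madj (madj A) = A"
  by (simp add: vec_eq_iff)

lemma madj_mult: "madj (A ** B) = madj B ** madj A"
  by (simp add: vec_eq_iff mmult_nth mult.commute)

lemma madj_kron: "madj (kron A B) = kron (madj A) (madj B)"
proof -
  have "madj (kron A B) $ (i,k) $ (j,l) = kron (madj A) (madj B) $ (i,k) $ (j,l)" for i k j l by simp
  then show ?thesis unfolding vec_eq_iff split_paired_All by blast
qed

lemma madj_mat1: "madj (mat 1 :: complex^'i^'i) = mat 1"
  by (simp add: vec_eq_iff mat1_nth)

lemma mult_diff_ldistrib: "(c::complex^'i::finite^'i) ** (X - Y) = c ** X - c ** Y"
  by (simp add: vec_eq_iff mmult_nth algebra_simps sum_subtractf)

lemma hs_inner_mult_left: "hs_inner Z (c ** Y) = hs_inner (madj c ** Z) Y"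
proof -
  have "hs_inner Z (c ** Y) = (\<Sum>i\<in>UNIV. \<Sum>j\<in>UNIV. \<Sum>k\<in>UNIV. cnj (Z$i$j) * c$i$k * Y$k$j)"
    by (simp add: hs_inner_alt mmult_nth sum_distrib_left mult.assoc)
  also have "\<dots> = (\<Sum>i\<in>UNIV. \<Sum>k\<in>UNIV. \<Sum>j\<in>UNIV. cnj (Z$i$j) * c$i$k * Y$k$j)"
    by (rule sum.cong[OF refl], rule sum.swap)
  also have "\<dots> = (\<Sum>k\<in>UNIV. \<Sum>j\<in>UNIV. \<Sum>i\<in>UNIV. cnj (Z$i$j) * c$i$k * Y$k$j)"
    by (rule L2)
  also have "\<dots> = hs_inner (madj c ** Z) Y"
    by (simp add: hs_inner_alt mmult_nth sum_distrib_right sum_distrib_left cnj_sum mult_ac)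
  finally show ?thesis .
qed

lemma op_comm:
  assumes V: "csubspace V" and c1: "\<forall>X\<in>V. c ** X \<in> V" and c2: "\<forall>X\<in>V. madj c ** X \<in> V"
  shows "orth_proj V (c ** X) = c ** orth_proj V X"
proof (rule op_char[OF V])
  show "c ** orth_proj V X \<in> V" using c1 op_in[OF V] by blast
  show "\<forall>Z\<in>V. hs_inner Z (c ** X - c ** orth_proj V X) = 0"
    using c2 op_orth[OF V] by (simp add: mult_diff_ldistrib[symmetric] hs_inner_mult_left)
qed

lemma op_comm_kernel:
  assumes V: "csubspace V" and c: "\<And>X. orth_proj V (c ** X) = c ** orth_proj V X"
  shows "(\<Sum>x\<in>UNIV. c$u$x * orth_proj V (munit w a) $ x $ b) = (\<Sum>x\<in>UNIV. orth_proj V (munit x a) $ u $ b * c$x$w)"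
proof -
  have "(\<Sum>x\<in>UNIV. c$u$x * orth_proj V (munit w a) $ x $ b) = (c ** orth_proj V (munit w a)) $ u $ b"
    by (simp add: mmult_nth)
  also have "\<dots> = orth_proj V (c ** munit w a) $ u $ b" by (simp add: c)
  also have "\<dots> = (\<Sum>x\<in>UNIV. orth_proj V (munit x a) $ u $ b * c$x$w)"
    by (subst op_entry[OF V, of "c ** munit w a"])
       (simp add: mmult_nth delta_simps2 mult.commute cong del: if_weak_cong)
  finally show ?thesis .
qed

lemma Rk_comm:
  assumes V: "csubspace V" and c: "\<And>X. orth_proj V (c ** X) = c ** orth_proj V X"
  shows "c ** Rk V a b = Rk V a b ** c"
  using op_comm_kernel[OF V c] by (simp add: vec_eq_iff mmult_nth Rk_def)

lemma madj_comm: "c ** R = R ** c \<Longrightarrow> madj c ** R = R ** madj c \<Longrightarrow> c ** madj R = madj R ** c"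
proof -
  assume h1: "c ** R = R ** c" and h2: "madj c ** R = R ** madj c"
  have "c ** madj R = madj (R ** madj c)" by (simp add: madj_mult)
  also have "\<dots> = madj (madj c ** R)" by (simp add: h2)
  also have "\<dots> = madj R ** c" by (simp add: madj_mult)
  finally show ?thesis .
qed

lemma commutant_madj: "fd_vNa M \<Longrightarrow> a \<in> commutant M \<Longrightarrow> madj a \<in> commutant M"
proof -
  assume M: "fd_vNa M" and a: "a \<in> commutant M"
  have "madj a ** x = x ** madj a" if x: "x \<in> M" for x
  proof -
    have mx: "madj x \<in> M" using M x unfolding fd_vNa_def by blast
    have "a ** madj x = madj x ** a" using a mx unfolding commutant_def by blast
    then have "madj (madj x ** a) = madj (a ** madj x)" by simp
    then show ?thesis by (simp add: madj_mult)
  qed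
  then show ?thesis unfolding commutant_def by blast
qed



lemma fd_vNa_csubspace: "fd_vNa A \<Longrightarrow> csubspace A"
  by (simp add: fd_vNa_def)

lemma bicommutant:
  assumes A: "fd_vNa A" and x: "x \<in> commutant (commutant A)"
  shows "x \<in> A"
proof -
  have S: "csubspace A" using A by (simp add: fd_vNa_def)
  let ?Q = "orth_proj A"
  have Qc: "?Q (y ** Z) = y ** ?Q Z" if y: "y \<in> A" for y Z
  proof (rule op_comm[OF S])
    show "\<forall>X\<in>A. y ** X \<in> A" using A y unfolding fd_vNa_def by blast
    have "madj y \<in> A" using A y unfolding fd_vNa_def by blast
    then show "\<forall>X\<in>A. madj y ** X \<in> A" using A unfolding fd_vNa_def by blast
  qed
  define Sl where "Sl b d = (\<chi> a c. ?Q (munit c d) $ a $ b)" for b d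
  have Sl_comm: "Sl b d \<in> commutant A" for b d
  proof -
    have "Sl b d ** y = y ** Sl b d" if y: "y \<in> A" for y
    proof -
      have "(Sl b d ** y) $ a $ e = (y ** Sl b d) $ a $ e" for a e
        using op_comm_kernel[OF S Qc[OF y], of a e d b] by (simp add: Sl_def mmult_nth)
      then show ?thesis by (simp add: vec_eq_iff)
    qed
    then show ?thesis unfolding commutant_def by blast
  qed
  have xS: "x ** Sl b d = Sl b d ** x" for b d
    using x Sl_comm unfolding commutant_def by blast
  have Q1: "?Q (mat 1) $ y $ b = (\<Sum>d\<in>UNIV. ?Q (munit d d) $ y $ b)" for y b
    by (subst op_entry[OF S, of "mat 1"]) (simp add: mat1_nth delta_simps2 cong del: if_weak_cong)
  have m1: "mat 1 \<in> A" using A by (simp add: fd_vNa_def)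
  have "?Q x $ a $ b = x $ a $ b" for a b
  proof -
    have "?Q x $ a $ b = (\<Sum>c\<in>UNIV. \<Sum>d\<in>UNIV. x$c$d * ?Q (munit c d) $ a $ b)"
      by (rule op_entry[OF S])
    also have "\<dots> = (\<Sum>d\<in>UNIV. \<Sum>c\<in>UNIV. Sl b d $ a $ c * x$c$d)"
      by (subst sum.swap) (simp add: Sl_def mult.commute)
    also have "\<dots> = (\<Sum>d\<in>UNIV. (Sl b d ** x) $ a $ d)"
      by (simp add: mmult_nth)
    also have "\<dots> = (\<Sum>d\<in>UNIV. (x ** Sl b d) $ a $ d)"
      by (simp add: xS)
    also have "\<dots> = (\<Sum>d\<in>UNIV. \<Sum>y\<in>UNIV. x$a$y * ?Q (munit d d) $ y $ b)"
      by (simp add: mmult_nth Sl_def)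
    also have "\<dots> = (\<Sum>y\<in>UNIV. x$a$y * (\<Sum>d\<in>UNIV. ?Q (munit d d) $ y $ b))"
      by (subst sum.swap) (simp add: sum_distrib_left)
    also have "\<dots> = (\<Sum>y\<in>UNIV. x$a$y * ?Q (mat 1) $ y $ b)"
      by (simp add: Q1)
    also have "\<dots> = x $ a $ b"
      by (simp add: op_fix[OF S m1] mat1_nth delta_simps2 cong del: if_weak_cong)
    finally show ?thesis .
  qed
  then have "?Q x = x" by (simp add: vec_eq_iff)
  then show ?thesis using op_in[OF S, of x] by simp
qed


lemma kron_a1_left: "(kron a (mat 1) ** x) $ (p,k) $ (q,l) = (\<Sum>p'\<in>UNIV. a$p$p' * x$(p',k)$(q,l))"
  by (simp add: mmult_nth sum_UNIV_prod mat1_nth delta_simps2 cong del: if_weak_cong)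
lemma kron_a1_right: "(x ** kron a (mat 1)) $ (p,k) $ (q,l) = (\<Sum>q'\<in>UNIV. x$(p,k)$(q',l) * a$q'$q)"
  by (simp add: mmult_nth sum_UNIV_prod mat1_nth delta_simps2 cong del: if_weak_cong)
lemma kron_1z_left: "(kron (mat 1) z ** x) $ (p,k) $ (q,l) = (\<Sum>k'\<in>UNIV. z$k$k' * x$(p,k')$(q,l))"
  by (simp add: mmult_nth sum_UNIV_prod mat1_nth delta_simps2 cong del: if_weak_cong)
lemma kron_1z_right: "(x ** kron (mat 1) z) $ (p,k) $ (q,l) = (\<Sum>l'\<in>UNIV. x$(p,k)$(q,l') * z$l'$l)"
  by (simp add: mmult_nth sum_UNIV_prod mat1_nth delta_simps2 cong del: if_weak_cong)

lemma tensor_bicomm: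
  fixes M :: "(complex^'n::finite^'n) set" and N :: "(complex^'k::finite^'k) set"
    and x :: "complex^('n\<times>'k)^('n\<times>'k)"
  assumes M: "fd_vNa M" and N: "fd_vNa N"
    and x1: "\<And>a. a \<in> commutant M \<Longrightarrow> kron a (mat 1) ** x = x ** kron a (mat 1)"
    and x2: "\<And>z. z \<in> commutant N \<Longrightarrow> kron (mat 1) z ** x = x ** kron (mat 1) z"
  shows "x \<in> alg_tensor M N"
proof -
  define sl1 where "sl1 k l = (\<chi> p q. x$(p,k)$(q,l))" for k l
  define sl2 where "sl2 p q = (\<chi> k l. x$(p,k)$(q,l))" for p q
  have s1: "sl1 k l \<in> M" for k l
  proof (rule bicommutant[OF M])
    have "sl1 k l ** a = a ** sl1 k l" if a: "a \<in> commutant M" for a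
    proof -
      have "(sl1 k l ** a) $ p $ q = (a ** sl1 k l) $ p $ q" for p q
      proof -
        have "(kron a (mat 1) ** x) $ (p,k) $ (q,l) = (x ** kron a (mat 1)) $ (p,k) $ (q,l)"
          using x1[OF a] by simp
        then show ?thesis unfolding kron_a1_left kron_a1_right by (simp add: mmult_nth sl1_def)
      qed
      then show ?thesis by (simp add: vec_eq_iff)
    qed
    then show "sl1 k l \<in> commutant (commutant M)" unfolding commutant_def by blast
  qed
  have s2: "sl2 p q \<in> N" for p q
  proof (rule bicommutant[OF N])
    have "sl2 p q ** z = z ** sl2 p q" if z: "z \<in> commutant N" for z
    proof -
      have "(sl2 p q ** z) $ k $ l = (z ** sl2 p q) $ k $ l" for k l
      proof -
        have "(kron (mat 1) z ** x) $ (p,k) $ (q,l) = (x ** kron (mat 1) z) $ (p,k) $ (q,l)"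
          using x2[OF z] by simp
        then show ?thesis unfolding kron_1z_left kron_1z_right by (simp add: mmult_nth sl2_def)
      qed
      then show ?thesis by (simp add: vec_eq_iff)
    qed
    then show "sl2 p q \<in> commutant (commutant N)" unfolding commutant_def by blast
  qed
  have SN: "csubspace N" using N by (rule fd_vNa_csubspace)
  let ?Q = "orth_proj N"
  have eq: "x = (\<Sum>k'\<in>UNIV. \<Sum>l'\<in>UNIV. kron (sl1 k' l') (?Q (munit k' l')))"
  proof -
    have "x $ (p,k) $ (q,l) = (\<Sum>k'\<in>UNIV. \<Sum>l'\<in>UNIV. kron (sl1 k' l') (?Q (munit k' l'))) $ (p,k) $ (q,l)" for p k q l
    proof -
      have "x $ (p,k) $ (q,l) = sl2 p q $ k $ l" by (simp add: sl2_def)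
      also have "\<dots> = ?Q (sl2 p q) $ k $ l" by (simp add: op_fix[OF SN s2])
      also have "\<dots> = (\<Sum>k'\<in>UNIV. \<Sum>l'\<in>UNIV. sl2 p q $k'$l' * ?Q (munit k' l') $ k $ l)"
        by (rule op_entry[OF SN])
      also have "\<dots> = (\<Sum>k'\<in>UNIV. \<Sum>l'\<in>UNIV. kron (sl1 k' l') (?Q (munit k' l'))) $ (p,k) $ (q,l)"
        by (simp add: sum_component sl1_def sl2_def)
      finally show ?thesis .
    qed
    then show ?thesis unfolding vec_eq_iff split_paired_All by blast
  qed
  have "(\<Sum>k'\<in>UNIV. \<Sum>l'\<in>UNIV. kron (sl1 k' l') (?Q (munit k' l'))) \<in> alg_tensor M N"
    by (intro csubspace_sum[OF alg_tensor_csubspace] kron_in_alg_tensor s1 op_in[OF SN])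
  then show ?thesis using eq by simp
qed



lemma Rk_madj_comm:
  assumes W: "csubspace W" and h1: "\<forall>X\<in>W. c ** X \<in> W" and h2: "\<forall>X\<in>W. madj c ** X \<in> W"
  shows "c ** madj (Rk W a b) = madj (Rk W a b) ** c"
proof -
  have h3: "\<forall>X\<in>W. madj (madj c) ** X \<in> W" using h1 by simp
  have 1: "c ** Rk W a b = Rk W a b ** c"
    by (rule Rk_comm[OF W]) (rule op_comm[OF W h1 h2])
  have 2: "madj c ** Rk W a b = Rk W a b ** madj c"
    by (rule Rk_comm[OF W]) (rule op_comm[OF W h2 h3])
  show ?thesis by (rule madj_comm[OF 1 2])
qed

lemma ptrK_kron: "c ** ptrK X = ptrK (kron c (mat 1) ** X)"
proof -
  have "(c ** ptrK X) $ i $ j = ptrK (kron c (mat 1) ** X) $ i $ j" for i j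
  proof -
    have "(c ** ptrK X) $ i $ j = (\<Sum>k\<in>UNIV. \<Sum>p\<in>UNIV. c$i$k * X$(k,p)$(j,p))"
      by (simp add: mmult_nth ptrK_def sum_distrib_left)
    also have "\<dots> = (\<Sum>p\<in>UNIV. \<Sum>k\<in>UNIV. c$i$k * X$(k,p)$(j,p))"
      by (rule sum.swap)
    also have "\<dots> = ptrK (kron c (mat 1) ** X) $ i $ j"
      by (simp add: ptrK_def kron_a1_left)
    finally show ?thesis .
  qed
  then show ?thesis by (simp add: vec_eq_iff)
qed

theorem theorem4p13:
  fixes M :: "(complex^'n::finite^'n) set"
    and N :: "(complex^'k::finite^'k) set"
    and V :: "(complex^('n\<times>'k)^('n\<times>'k)) set"
  assumes "fd_vNa M" and "fd_vNa N"
    and "minimally_represented M" and "minimally_represented N"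
    and "q_multi_relation M N V"
  shows "cp_on (alg_tensor M N) (A_PV V)
    \<and> cp_on M (A_SV V)
    \<and> cp_on M (A_PVt V)
    \<and> schur_idempotent (alg_tensor M N) (A_PV V)
    \<and> schur_idempotent M (A_PVt V)"
proof -
  note M = assms(1) and N = assms(2) and minN = assms(4)
  have V: "csubspace V" and hV1: "\<forall>a\<in>commutant M. \<forall>X\<in>V. kron a (mat 1) ** X \<in> V"
    and hV2: "\<forall>z\<in>center N. \<forall>X\<in>V. kron (mat 1) z ** X \<in> V"
    using assms(5) unfolding q_multi_relation_def by auto
  have cN: "commutant N = center N" using minN by (simp add: minimally_represented_def)
  have R1: "madj (Rk V a b) \<in> alg_tensor M N" for a b
  proof (rule tensor_bicomm[OF M N])
    fix c assume c: "c \<in> commutant M"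
    have mc: "madj c \<in> commutant M" by (rule commutant_madj[OF M c])
    show "kron c (mat 1) ** madj (Rk V a b) = madj (Rk V a b) ** kron c (mat 1)"
    proof (rule Rk_madj_comm[OF V])
      show "\<forall>X\<in>V. kron c (mat 1) ** X \<in> V" using hV1 c by blast
      show "\<forall>X\<in>V. madj (kron c (mat 1)) ** X \<in> V" using hV1 mc by (simp add: madj_kron madj_mat1)
    qed
  next
    fix z assume z: "z \<in> commutant N"
    have zc: "z \<in> center N" using z cN by simp
    have mz1: "madj z \<in> commutant N" by (rule commutant_madj[OF N z])
    have "madj z \<in> N" using zc N unfolding center_def fd_vNa_def by blast
    then have mz: "madj z \<in> center N" using mz1 unfolding center_def by blast
    show "kron (mat 1) z ** madj (Rk V a b) = madj (Rk V a b) ** kron (mat 1) z"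
    proof (rule Rk_madj_comm[OF V])
      show "\<forall>X\<in>V. kron (mat 1) z ** X \<in> V" using hV2 zc by blast
      show "\<forall>X\<in>V. madj (kron (mat 1) z) ** X \<in> V" using hV2 mz by (simp add: madj_kron madj_mat1)
    qed
  qed
  have Vt: "csubspace (V_tilde V)" by (rule csubspace_V_tilde[OF V])
  have Vt_mod: "\<forall>Y\<in>V_tilde V. c ** Y \<in> V_tilde V" if c: "c \<in> commutant M" for c
  proof
    fix Y assume "Y \<in> V_tilde V"
    then obtain X where X: "X \<in> V" "Y = ptrK X" unfolding V_tilde_def by blast
    have "kron c (mat 1) ** X \<in> V" using hV1 c X by blast
    then show "c ** Y \<in> V_tilde V" unfolding X ptrK_kron V_tilde_def by blast
  qed
  have R2: "madj (Rk (V_tilde V) a b) \<in> M" for a b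
  proof (rule bicommutant[OF M])
    have "madj (Rk (V_tilde V) a b) ** c = c ** madj (Rk (V_tilde V) a b)" if c: "c \<in> commutant M" for c
    proof -
      have mc: "madj c \<in> commutant M" by (rule commutant_madj[OF M c])
      show ?thesis using Rk_madj_comm[OF Vt Vt_mod[OF c] Vt_mod[OF mc]] by simp
    qed
    then show "madj (Rk (V_tilde V) a b) \<in> commutant (commutant M)" unfolding commutant_def by blast
  qed
  have S1: "schur_idempotent (alg_tensor M N) (A_PV V)"
    by (rule schur_gen[OF V _ R1]) (rule A_PV_formula[OF V])
  have S2: "schur_idempotent M (A_PVt V)"
    by (rule schur_gen[OF Vt _ R2]) (rule A_PVt_formula[OF V])
  show ?thesis using cp_A_PV[OF V] cp_A_SV[OF V] cp_A_PVt[OF V] S1 S2 by blast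
qed

end
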